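(* If $B$ is a set of colors with $|B|=3$, then $\beta_B=4$.
   Context: Let $K_{2,t}$ be the complete bipartite graph with parts $U=\{u_1,u_2\}$ and $W=\{w_1,\dots,w_t\}$. For an edge coloring $c$ of $K_{2,t}$ (adjacent edges may share colors), the color code of $w\in W$ is the ordered pair $(c(u_1w),c(u_2w))$. A tree is rainbow if no two of its edges share a color; for a vertex set $S$, an $S$-tree is a subtree containing $S$; a $3$-rainbow coloring of a graph is an edge coloring such that every set $S$ of three vertices has a rainbow $S$-tree. The color codes of a subset $Y\subseteq W$ are acceptable if the coloring restricted to the subgraph induced by $Y\cup U$ is a $3$-rainbow coloring of that subgraph. For a set of colors $B$, color codes are $B$-limited if both entries of every color code lie in $B$. $\beta_B$ denotes the maximum number of vertices $|Y|$ (equivalently, the maximum $t$) for which there is an edge coloring whose color codes on $Y$ are both $B$-limited and acceptable. *)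

theory Defs
  imports Main
begin

definition edge_rel :: "'v set set \<Rightarrow> ('v \<times> 'v) set" where
  "edge_rel F = {(x, y). {x, y} \<in> F}"

definition is_tree :: "'v set \<Rightarrow> 'v set set \<Rightarrow> bool" where
  "is_tree T F \<longleftrightarrow> finite T \<and> T \<noteq> {} \<and> (\<forall>e\<in>F. card e = 2 \<and> e \<subseteq> T)
     \<and> (\<forall>x\<in>T. \<forall>y\<in>T. (x, y) \<in> (edge_rel F)\<^sup>*) \<and> card F + 1 = card T"

definition rainbow_S_tree :: "'v set \<Rightarrow> 'v set set \<Rightarrow> ('v set \<Rightarrow> 'c) \<Rightarrow> 'v set
    \<Rightarrow> 'v set \<Rightarrow> 'v set set \<Rightarrow> bool" where
  "rainbow_S_tree V E c S T F \<longleftrightarrow> is_tree T F \<and> T \<subseteq> V \<and> F \<subseteq> E \<and> S \<subseteq> T \<and> inj_on c F"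

definition rainbow3 :: "'v set \<Rightarrow> 'v set set \<Rightarrow> ('v set \<Rightarrow> 'c) \<Rightarrow> bool" where
  "rainbow3 V E c \<longleftrightarrow> (\<forall>S. S \<subseteq> V \<and> card S = 3 \<longrightarrow> (\<exists>T F. rainbow_S_tree V E c S T F))"

text \<open>The complete bipartite graph K_{2,t}: U = {U1,U2}, W = {Wv i | i < t}.\<close>
datatype kv = U1 | U2 | Wv nat

definition Wset :: "nat \<Rightarrow> kv set" where
  "Wset t = Wv ` {..<t}"

definition Kedges :: "nat \<Rightarrow> kv set set" where
  "Kedges t = {{U1, w} | w. w \<in> Wset t} \<union> {{U2, w} | w. w \<in> Wset t}"

definition color_code :: "(kv set \<Rightarrow> 'c) \<Rightarrow> kv \<Rightarrow> 'c \<times> 'c" where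
  "color_code c w = (c {U1, w}, c {U2, w})"

definition acceptable :: "nat \<Rightarrow> (kv set \<Rightarrow> 'c) \<Rightarrow> kv set \<Rightarrow> bool" where
  "acceptable t c Y \<longleftrightarrow>
     rainbow3 ({U1, U2} \<union> Y) {e \<in> Kedges t. e \<subseteq> {U1, U2} \<union> Y} c"

definition limited :: "'c set \<Rightarrow> (kv set \<Rightarrow> 'c) \<Rightarrow> kv set \<Rightarrow> bool" where
  "limited B c Y \<longleftrightarrow> (\<forall>w\<in>Y. fst (color_code c w) \<in> B \<and> snd (color_code c w) \<in> B)"

definition beta_set :: "'c set \<Rightarrow> nat set" where
  "beta_set B = {card Y | t c Y. Y \<subseteq> Wset t \<and> limited B c Y \<and> acceptable t c Y}"

definition beta :: "'c set \<Rightarrow> nat" where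
  "beta B = (GREATEST n. n \<in> beta_set B)"

end

theory Submission imports Defs begin

lemma er: "{x,y} \<in> F \<Longrightarrow> (x,y) \<in> (edge_rel F)\<^sup>* \<and> (y,x) \<in> (edge_rel F)\<^sup>*"
  by (auto simp: edge_rel_def insert_commute intro!: r_into_rtrancl)

lemma path3_tree:
  assumes "x\<noteq>y" "y\<noteq>z" "x\<noteq>z"
  shows "is_tree {x,y,z} {{x,y},{y,z}}"
proof -
  have a: "(x,y) \<in> (edge_rel {{x,y},{y,z}})\<^sup>*" "(y,x) \<in> (edge_rel {{x,y},{y,z}})\<^sup>*"
     "(y,z) \<in> (edge_rel {{x,y},{y,z}})\<^sup>*" "(z,y) \<in> (edge_rel {{x,y},{y,z}})\<^sup>*"
    using er[of x y "{{x,y},{y,z}}"] er[of y z "{{x,y},{y,z}}"] by auto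
  have "card {{x,y},{y,z}} = 2" using assms by (auto simp: doubleton_eq_iff)
  then show ?thesis using assms a unfolding is_tree_def
    by (auto intro: rtrancl_trans)
qed

lemma path4_tree:
  assumes "distinct [a,b,c,d]"
  shows "is_tree {a,b,c,d} {{a,b},{b,c},{c,d}}"
proof -
  let ?F = "{{a,b},{b,c},{c,d}}"
  have e: "(a,b) \<in> (edge_rel ?F)\<^sup>*" "(b,a) \<in> (edge_rel ?F)\<^sup>*"
     "(b,c) \<in> (edge_rel ?F)\<^sup>*" "(c,b) \<in> (edge_rel ?F)\<^sup>*"
     "(c,d) \<in> (edge_rel ?F)\<^sup>*" "(d,c) \<in> (edge_rel ?F)\<^sup>*"
    using er[of a b ?F] er[of b c ?F] er[of c d ?F] by auto
  have "card ?F = 3" using assms by (auto simp: doubleton_eq_iff card_insert_if)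
  moreover have "card {a,b,c,d} = 4" using assms by auto
  ultimately show ?thesis using assms e unfolding is_tree_def
    by (auto intro: rtrancl_trans)
qed

lemma star_tree:
  assumes "distinct [u,x,y,z]"
  shows "is_tree {u,x,y,z} {{u,x},{u,y},{u,z}}"
proof -
  let ?F = "{{u,x},{u,y},{u,z}}"
  have e: "(u,x) \<in> (edge_rel ?F)\<^sup>*" "(x,u) \<in> (edge_rel ?F)\<^sup>*"
     "(u,y) \<in> (edge_rel ?F)\<^sup>*" "(y,u) \<in> (edge_rel ?F)\<^sup>*"
     "(u,z) \<in> (edge_rel ?F)\<^sup>*" "(z,u) \<in> (edge_rel ?F)\<^sup>*"
    using er[of u x ?F] er[of u y ?F] er[of u z ?F] by auto
  have "card ?F = 3" using assms by (auto simp: doubleton_eq_iff card_insert_if)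
  moreover have "card {u,x,y,z} = 4" using assms by auto
  ultimately show ?thesis using assms e unfolding is_tree_def
    by (auto intro: rtrancl_trans)
qed


lemma rst3:
  assumes "x\<noteq>y" "y\<noteq>z" "x\<noteq>z" "{x,y,z} \<subseteq> V" "{x,y} \<in> E" "{y,z} \<in> E"
    "c {x,y} \<noteq> c {y,z}" "S \<subseteq> {x,y,z}"
  shows "\<exists>T F. rainbow_S_tree V E c S T F"
  apply (rule exI[of _ "{x,y,z}"], rule exI[of _ "{{x,y},{y,z}}"])
  using assms path3_tree[of x y z] unfolding rainbow_S_tree_def by auto

lemma rst4:
  assumes "distinct [a,b,d,e]" "{a,b,d,e} \<subseteq> V" "{a,b} \<in> E" "{b,d} \<in> E" "{d,e} \<in> E"
    "c {a,b} \<noteq> c {b,d}" "c {a,b} \<noteq> c {d,e}" "c {b,d} \<noteq> c {d,e}" "S \<subseteq> {a,b,d,e}"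
  shows "\<exists>T F. rainbow_S_tree V E c S T F"
  apply (rule exI[of _ "{a,b,d,e}"], rule exI[of _ "{{a,b},{b,d},{d,e}}"])
  using assms path4_tree[of a b d e] unfolding rainbow_S_tree_def by auto

lemma rstS:
  assumes "distinct [u,x,y,z]" "{u,x,y,z} \<subseteq> V" "{u,x} \<in> E" "{u,y} \<in> E" "{u,z} \<in> E"
    "c {u,x} \<noteq> c {u,y}" "c {u,x} \<noteq> c {u,z}" "c {u,y} \<noteq> c {u,z}" "S \<subseteq> {u,x,y,z}"
  shows "\<exists>T F. rainbow_S_tree V E c S T F"
  apply (rule exI[of _ "{u,x,y,z}"], rule exI[of _ "{{u,x},{u,y},{u,z}}"])
  using assms star_tree[of u x y z] unfolding rainbow_S_tree_def by auto

lemma Wset_ne: "w \<in> Wset t \<Longrightarrow> w \<noteq> U1 \<and> w \<noteq> U2"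
  by (auto simp: Wset_def)

lemma inE: assumes "Y \<subseteq> Wset t" "w \<in> Y"
  shows "{U1,w} \<in> {e \<in> Kedges t. e \<subseteq> {U1, U2} \<union> Y}" "{w,U1} \<in> {e \<in> Kedges t. e \<subseteq> {U1, U2} \<union> Y}"
   "{U2,w} \<in> {e \<in> Kedges t. e \<subseteq> {U1, U2} \<union> Y}" "{w,U2} \<in> {e \<in> Kedges t. e \<subseteq> {U1, U2} \<union> Y}"
  using assms by (auto simp: Kedges_def insert_commute)

lemma rainbow3_good:
  fixes c :: "kv set \<Rightarrow> 'c"
  assumes Y: "Y \<subseteq> Wset t"
  and C1: "\<forall>w\<in>Y. c{U1,w} \<noteq> c{U2,w}"
  and C2: "\<forall>w\<in>Y. \<forall>w'\<in>Y. w\<noteq>w' \<longrightarrow> c{U1,w} \<noteq> c{U1,w'}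
      \<or> (c{U1,w} \<noteq> c{U2,w} \<and> c{U2,w} \<noteq> c{U2,w'} \<and> c{U1,w} \<noteq> c{U2,w'})
      \<or> (c{U1,w'} \<noteq> c{U2,w'} \<and> c{U2,w'} \<noteq> c{U2,w} \<and> c{U1,w'} \<noteq> c{U2,w})"
  and C2': "\<forall>w\<in>Y. \<forall>w'\<in>Y. w\<noteq>w' \<longrightarrow> c{U2,w} \<noteq> c{U2,w'}
      \<or> (c{U2,w} \<noteq> c{U1,w} \<and> c{U1,w} \<noteq> c{U1,w'} \<and> c{U2,w} \<noteq> c{U1,w'})
      \<or> (c{U2,w'} \<noteq> c{U1,w'} \<and> c{U1,w'} \<noteq> c{U1,w} \<and> c{U2,w'} \<noteq> c{U1,w})"
  and C3: "\<forall>w1\<in>Y. \<forall>w2\<in>Y. \<forall>w3\<in>Y. w1\<noteq>w2 \<and> w1\<noteq>w3 \<and> w2\<noteq>w3 \<longrightarrow>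
      (c{U1,w1} \<noteq> c{U1,w2} \<and> c{U1,w1} \<noteq> c{U1,w3} \<and> c{U1,w2} \<noteq> c{U1,w3})
    \<or> (c{U2,w1} \<noteq> c{U2,w2} \<and> c{U2,w1} \<noteq> c{U2,w3} \<and> c{U2,w2} \<noteq> c{U2,w3})"
  shows "rainbow3 ({U1,U2} \<union> Y) {e \<in> Kedges t. e \<subseteq> {U1,U2} \<union> Y} c"
  unfolding rainbow3_def
proof (intro allI impI, elim conjE)
  fix S assume SV: "S \<subseteq> {U1,U2} \<union> Y" and cS: "card S = 3"
  let ?V = "{U1,U2} \<union> Y" and ?E = "{e \<in> Kedges t. e \<subseteq> {U1,U2} \<union> Y}"
  have fS: "finite S" using cS by (metis card.infinite zero_neq_numeral)
  have ne: "\<And>w. w \<in> Y \<Longrightarrow> w \<noteq> U1 \<and> w \<noteq> U2" using Y Wset_ne by blast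
  note E = inE[OF Y]
  show "\<exists>T F. rainbow_S_tree ?V ?E c S T F"
  proof (cases "U1 \<in> S")
    case True
    show ?thesis
    proof (cases "U2 \<in> S")
      case True2: True
      have "card (S - {U1,U2}) = Suc 0" using True True2 cS fS by (simp add: card_Diff_subset)
      then obtain w where w: "S - {U1,U2} = {w}" by (auto simp: card_1_singleton_iff)
      then have wY: "w \<in> Y" using SV by auto
      have SS: "S \<subseteq> {U1,w,U2}" using w by auto
      show ?thesis
        apply (rule rst3[OF _ _ _ _ _ _ _ SS])
        using ne[OF wY] wY E[OF wY] C1 by (auto simp: insert_commute)
    next
      case False
      have "card (S - {U1}) = 2" using True cS fS by (simp add: card_Diff_subset)
      then obtain w w' where w: "S - {U1} = {w,w'}" "w \<noteq> w'" by (auto simp: card_2_iff)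
      then have wY: "w \<in> Y" "w' \<in> Y" using SV False by auto
      have SS: "S \<subseteq> {w,U1,w'}" "S \<subseteq> {U1,w,U2,w'}" "S \<subseteq> {U1,w',U2,w}" using w by auto
      have d: "distinct [U1,w,U2,w']" "distinct [U1,w',U2,w]" using ne wY w by auto
      from C2 wY w(2) consider "c{U1,w} \<noteq> c{U1,w'}"
        | "c{U1,w} \<noteq> c{U2,w} \<and> c{U2,w} \<noteq> c{U2,w'} \<and> c{U1,w} \<noteq> c{U2,w'}"
        | "c{U1,w'} \<noteq> c{U2,w'} \<and> c{U2,w'} \<noteq> c{U2,w} \<and> c{U1,w'} \<noteq> c{U2,w}" by blast
      then show ?thesis
      proof cases
        case 1 show ?thesis
          apply (rule rst3[OF _ _ _ _ _ _ _ SS(1)])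
          using ne wY E[OF wY(1)] E[OF wY(2)] 1 w(2) by (auto simp: insert_commute)
      next
        case 2 show ?thesis
          apply (rule rst4[OF d(1) _ _ _ _ _ _ _ SS(2)])
          using ne wY E[OF wY(1)] E[OF wY(2)] 2 by (auto simp: insert_commute)
      next
        case 3 show ?thesis
          apply (rule rst4[OF d(2) _ _ _ _ _ _ _ SS(3)])
          using ne wY E[OF wY(1)] E[OF wY(2)] 3 by (auto simp: insert_commute)
      qed
    qed
  next
    case False
    show ?thesis
    proof (cases "U2 \<in> S")
      case True
      have "card (S - {U2}) = 2" using True cS fS by (simp add: card_Diff_subset)
      then obtain w w' where w: "S - {U2} = {w,w'}" "w \<noteq> w'" by (auto simp: card_2_iff)
      then have wY: "w \<in> Y" "w' \<in> Y" using SV False by auto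
      have SS: "S \<subseteq> {w,U2,w'}" "S \<subseteq> {U2,w,U1,w'}" "S \<subseteq> {U2,w',U1,w}" using w by auto
      have d: "distinct [U2,w,U1,w']" "distinct [U2,w',U1,w]" using ne wY w by auto
      from C2' wY w(2) consider "c{U2,w} \<noteq> c{U2,w'}"
        | "c{U2,w} \<noteq> c{U1,w} \<and> c{U1,w} \<noteq> c{U1,w'} \<and> c{U2,w} \<noteq> c{U1,w'}"
        | "c{U2,w'} \<noteq> c{U1,w'} \<and> c{U1,w'} \<noteq> c{U1,w} \<and> c{U2,w'} \<noteq> c{U1,w}" by blast
      then show ?thesis
      proof cases
        case 1 show ?thesis
          apply (rule rst3[OF _ _ _ _ _ _ _ SS(1)])
          using ne wY E[OF wY(1)] E[OF wY(2)] 1 w(2) by (auto simp: insert_commute)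
      next
        case 2 show ?thesis
          apply (rule rst4[OF d(1) _ _ _ _ _ _ _ SS(2)])
          using ne wY E[OF wY(1)] E[OF wY(2)] 2 by (auto simp: insert_commute)
      next
        case 3 show ?thesis
          apply (rule rst4[OF d(2) _ _ _ _ _ _ _ SS(3)])
          using ne wY E[OF wY(1)] E[OF wY(2)] 3 by (auto simp: insert_commute)
      qed
    next
      case False2: False
      obtain w1 w2 w3 where w: "S = {w1,w2,w3}" "w1\<noteq>w2" "w2\<noteq>w3" "w1\<noteq>w3"
        using cS by (auto simp: card_3_iff)
      then have wY: "w1 \<in> Y" "w2 \<in> Y" "w3 \<in> Y" using SV False False2 by auto
      have d: "distinct [U1,w1,w2,w3]" "distinct [U2,w1,w2,w3]" using ne wY w by auto
      from C3 wY w consider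
          "c{U1,w1} \<noteq> c{U1,w2} \<and> c{U1,w1} \<noteq> c{U1,w3} \<and> c{U1,w2} \<noteq> c{U1,w3}"
        | "c{U2,w1} \<noteq> c{U2,w2} \<and> c{U2,w1} \<noteq> c{U2,w3} \<and> c{U2,w2} \<noteq> c{U2,w3}" by blast
      then show ?thesis
      proof cases
        case 1 show ?thesis
          apply (rule rstS[OF d(1)])
          using wY E[OF wY(1)] E[OF wY(2)] E[OF wY(3)] 1 w by auto
      next
        case 2 show ?thesis
          apply (rule rstS[OF d(2)])
          using wY E[OF wY(1)] E[OF wY(2)] E[OF wY(3)] 2 w by auto
      qed
    qed
  qed
qed


lemma tree_star:
  fixes c :: "kv set \<Rightarrow> 'c"
  assumes Y: "Y \<subseteq> Wset t" and lim: "limited B c Y" and cB: "card B = 3"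
  and rt: "rainbow_S_tree ({U1,U2} \<union> Y) {e \<in> Kedges t. e \<subseteq> {U1,U2} \<union> Y} c {w1,w2,w3} T F"
  and wY: "w1\<in>Y" "w2\<in>Y" "w3\<in>Y" and wd: "w1\<noteq>w2" "w1\<noteq>w3" "w2\<noteq>w3"
  shows "(c{U1,w1} \<noteq> c{U1,w2} \<and> c{U1,w1} \<noteq> c{U1,w3} \<and> c{U1,w2} \<noteq> c{U1,w3})
    \<or> (c{U2,w1} \<noteq> c{U2,w2} \<and> c{U2,w1} \<noteq> c{U2,w3} \<and> c{U2,w2} \<noteq> c{U2,w3})"
proof -
  have tree: "is_tree T F" and FE: "F \<subseteq> {e \<in> Kedges t. e \<subseteq> {U1,U2} \<union> Y}"
    and ST: "{w1,w2,w3} \<subseteq> T" and inj: "inj_on c F"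
    using rt unfolding rainbow_S_tree_def by auto
  have finT: "finite T" and Fsub: "\<forall>e\<in>F. e \<subseteq> T" and conn: "\<forall>x\<in>T. \<forall>y\<in>T. (x, y) \<in> (edge_rel F)\<^sup>*"
    and cTF: "card F + 1 = card T"
    using tree unfolding is_tree_def by auto
  have finF: "finite F" using finite_subset[of F "Pow T"] Fsub finT by auto
  have ne: "\<And>w. w \<in> Y \<Longrightarrow> w \<noteq> U1 \<and> w \<noteq> U2" using Y Wset_ne by blast
  have finB: "finite B" using cB by (metis card.infinite zero_neq_numeral)
  have "c ` F \<subseteq> B"
  proof
    fix x assume "x \<in> c ` F"
    then obtain e where e: "e \<in> F" "x = c e" by auto
    then have eK: "e \<in> Kedges t" "e \<subseteq> {U1,U2} \<union> Y" using FE by auto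
    then obtain w u where "e = {u,w}" "u = U1 \<or> u = U2" "w \<in> Wset t" unfolding Kedges_def by auto
    moreover then have "w \<in> Y" using eK Wset_ne by auto
    ultimately show "x \<in> B" using lim e unfolding limited_def color_code_def by auto
  qed
  then have "card F \<le> 3" using card_image[OF inj] card_mono[OF finB] cB by metis
  then have cT: "card T \<le> 4" using cTF by simp
  have key: "c{u,w1} \<noteq> c{u,w2} \<and> c{u,w1} \<noteq> c{u,w3} \<and> c{u,w2} \<noteq> c{u,w3}"
    if u: "u \<in> T" "u = U1 \<or> u = U2" for u
  proof -
    let ?G = "{{u,w1},{u,w2},{u,w3}}"
    have d: "distinct [u,w1,w2,w3]" using ne wY wd u by auto
    have "{u,w1,w2,w3} \<subseteq> T" using u ST by auto
    moreover have "card {u,w1,w2,w3} = 4" using d by auto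
    ultimately have T: "T = {u,w1,w2,w3}" using card_seteq[OF finT] cT by metis
    then have cF: "card F = 3" using cTF d by simp
    have "F \<subseteq> ?G"
    proof
      fix e assume e: "e \<in> F"
      then have eK: "e \<in> Kedges t" "e \<subseteq> T" using FE Fsub by auto
      then obtain w u' where ew: "e = {u',w}" "u' = U1 \<or> u' = U2" "w \<in> Wset t" unfolding Kedges_def by auto
      then have "u' = u" using eK T u ne wY by auto
      moreover have "w \<in> {w1,w2,w3}" using ew eK T Wset_ne[OF ew(3)] u(2) by auto
      ultimately show "e \<in> ?G" using ew by auto
    qed
    moreover have "card ?G \<le> 3" by (auto simp: card_insert_if)
    ultimately have FG: "F = ?G" using card_seteq[of ?G F] cF by auto
    show ?thesis using inj unfolding FG using wd by (auto simp: doubleton_eq_iff)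
  qed
  have "w1 \<in> T" "w2 \<in> T" using ST by auto
  then have "(w1,w2) \<in> (edge_rel F)\<^sup>*" using conn by auto
  then obtain v where "(w1,v) \<in> edge_rel F" using wd(1)
    by (metis converse_rtranclE)
  then have vF: "{w1,v} \<in> F" unfolding edge_rel_def by auto
  then have "v \<in> T" using Fsub by auto
  moreover from vF FE obtain w u' where ew: "{w1,v} = {u',w}" "u' = U1 \<or> u' = U2"
    unfolding Kedges_def by auto
  then have "v = U1 \<or> v = U2" using ne[OF wY(1)] by (auto simp: doubleton_eq_iff)
  ultimately show ?thesis using key by blast
qed


lemma upper:
  fixes c :: "kv set \<Rightarrow> 'c"
  assumes Y: "Y \<subseteq> Wset t" and lim: "limited B c Y" and cB: "card B = 3"
  and acc: "acceptable t c Y"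
  shows "card Y \<le> 4"
proof (rule ccontr)
  assume "\<not> card Y \<le> 4"
  then have cY: "card Y \<ge> 5" by simp
  have finY: "finite Y" using Y finite_subset unfolding Wset_def by blast
  have ne: "\<And>w. w \<in> Y \<Longrightarrow> w \<noteq> U1 \<and> w \<noteq> U2" using Y Wset_ne by blast
  have finB: "finite B" using cB by (metis card.infinite zero_neq_numeral)
  define a where "a w = c{U1,w}" for w
  define b where "b w = c{U2,w}" for w
  have aB: "\<And>w. w \<in> Y \<Longrightarrow> a w \<in> B" and bB: "\<And>w. w \<in> Y \<Longrightarrow> b w \<in> B"
    using lim unfolding limited_def color_code_def a_def b_def by auto
  have T: "(a w1 \<noteq> a w2 \<and> a w1 \<noteq> a w3 \<and> a w2 \<noteq> a w3) \<or> (b w1 \<noteq> b w2 \<and> b w1 \<noteq> b w3 \<and> b w2 \<noteq> b w3)"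
    if "w1\<in>Y" "w2\<in>Y" "w3\<in>Y" "w1\<noteq>w2" "w1\<noteq>w3" "w2\<noteq>w3" for w1 w2 w3
  proof -
    have "{w1,w2,w3} \<subseteq> {U1,U2} \<union> Y" "card {w1,w2,w3} = 3" using that by auto
    then obtain T F where "rainbow_S_tree ({U1,U2} \<union> Y) {e \<in> Kedges t. e \<subseteq> {U1,U2} \<union> Y} c {w1,w2,w3} T F"
      using acc unfolding acceptable_def rainbow3_def by blast
    from tree_star[OF Y lim cB this that] show ?thesis unfolding a_def b_def .
  qed
  have three: "\<And>x y z. x \<in> B \<Longrightarrow> y \<in> B \<Longrightarrow> z \<in> B \<Longrightarrow> x\<noteq>y \<Longrightarrow> x\<noteq>z \<Longrightarrow> y\<noteq>z \<Longrightarrow> B = {x,y,z}"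
  proof -
    fix x y z assume "x \<in> B" "y \<in> B" "z \<in> B" "x\<noteq>y" "x\<noteq>z" "y\<noteq>z"
    then show "B = {x,y,z}" using card_seteq[OF finB, of "{x,y,z}"] cB by auto
  qed
  have "a ` Y \<subseteq> B" using aB by auto
  then have "card (a ` Y) \<le> 3" using card_mono[OF finB] cB by metis
  then have "\<not> inj_on a Y" using cY card_image by fastforce
  then obtain x y where xy: "x \<in> Y" "y \<in> Y" "x \<noteq> y" "a x = a y" unfolding inj_on_def by blast
  have "card (Y - {x,y}) \<ge> 3" using cY finY xy by (simp add: card_Diff_subset)
  then obtain Z where Z: "Z \<subseteq> Y - {x,y}" "card Z = 3" by (meson obtain_subset_with_card_n)
  then obtain z1 z2 z3 where z: "Z = {z1,z2,z3}" "z1\<noteq>z2" "z2\<noteq>z3" "z1\<noteq>z3" by (auto simp: card_3_iff)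
  then have zY: "z1 \<in> Y" "z2 \<in> Y" "z3 \<in> Y" "z1 \<noteq> x" "z2 \<noteq> x" "z3 \<noteq> x" "z1 \<noteq> y" "z2 \<noteq> y" "z3 \<noteq> y"
    using Z by auto
  have bz: "b x \<noteq> b y \<and> b x \<noteq> b z \<and> b y \<noteq> b z" if "z \<in> Y" "z \<noteq> x" "z \<noteq> y" for z
    using T[of x y z] that xy by auto
  have Bxy: "B = {b x, b y, b z1}" using three[of "b x" "b y" "b z1"] bB xy zY bz by auto
  have "b z2 = b z1" using bB[OF zY(2)] Bxy bz[of z2] zY by auto
  moreover have "b z3 = b z1" using bB[OF zY(3)] Bxy bz[of z3] zY by auto
  ultimately have az: "a z1 \<noteq> a z2 \<and> a z1 \<noteq> a z3 \<and> a z2 \<noteq> a z3" using T[of z1 z2 z3] zY z by auto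
  have ax: "a x \<noteq> a z1 \<and> a x \<noteq> a z2 \<and> a x \<noteq> a z3"
    using T[of x z1 z2] T[of x z2 z3] zY xy z \<open>b z2 = b z1\<close> \<open>b z3 = b z1\<close> by metis
  have "B = {a z1, a z2, a z3}" using three aB zY az by auto
  then show False using aB[OF xy(1)] ax by auto
qed

theorem claim3:
  fixes B :: "'c set"
  assumes "card B = 3"
  shows "4 \<in> beta_set B \<and> (\<forall>n\<in>beta_set B. n \<le> 4) \<and> beta B = 4"
proof -
  have ub: "\<forall>n\<in>beta_set B. n \<le> 4"
    using upper assms unfolding beta_set_def by blast
  obtain p q r where pqr: "B = {p,q,r}" "p\<noteq>q" "q\<noteq>r" "p\<noteq>r" using assms by (auto simp: card_3_iff)
  define c :: "kv set \<Rightarrow> 'c" where "c e = (if U1 \<in> e then (if Wv 0 \<in> e \<or> Wv 1 \<in> e then p else if Wv 2 \<in> e then q else r)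
     else (if Wv 0 \<in> e then q else if Wv 1 \<in> e then r else p))" for e
  have W4: "Wset 4 = {Wv 0, Wv 1, Wv 2, Wv 3}"
    unfolding Wset_def by (auto simp: lessThan_def less_Suc_eq numeral_eq_Suc)
  have acc: "acceptable 4 c (Wset 4)"
    unfolding acceptable_def
    apply (rule rainbow3_good[OF order_refl])
    unfolding W4 c_def using pqr by auto
  have lim: "limited B c (Wset 4)"
    unfolding limited_def W4 color_code_def c_def using pqr by auto
  have "card (Wset 4) = 4" unfolding W4 by simp
  then have four: "4 \<in> beta_set B" using acc lim unfolding beta_set_def by force
  have "beta B = 4" unfolding beta_def
    by (rule Greatest_equality) (use four ub in auto)
  then show ?thesis using four ub by blast
qed

end
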